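(* Let $\tau$ be a Euclidean triangle with edge lengths $\ell_1,\ell_2,\ell_3$ and interior angles $\alpha_1,\alpha_2,\alpha_3$ (the angle $\alpha_i$ opposite the edge of length $\ell_i$). The following are equivalent: (i) $\tau$ is generic, i.e. for some real $k>0$ the numbers $k\ell_1,k\ell_2,k\ell_3$ are algebraically independent over $\mathbb{Q}$; (s) for some (hence almost every) $k\in\mathbb{R}$ the numbers $k\sin\alpha_1,k\sin\alpha_2,k\sin\alpha_3$ are algebraically independent over $\mathbb{Q}$; (c) for some (hence almost every) $k\in\mathbb{R}$ the numbers $k\cos\alpha_1,k\cos\alpha_2,k\cos\alpha_3$ are algebraically independent over $\mathbb{Q}$.
   Context: Real numbers $a_1,a_2,a_3$ are algebraically independent over $\mathbb{Q}$ if there is no nonzero polynomial $p\in\mathbb{Z}[x_1,x_2,x_3]$ with $p(a_1,a_2,a_3)=0$. *)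

theory Defs
  imports "HOL-Analysis.Analysis"
begin

text \<open>A polynomial in Z[x1,x2,x3] is represented by its
  finitely supported coefficient function on exponent triples.\<close>
definition alg_indep3 :: "real \<Rightarrow> real \<Rightarrow> real \<Rightarrow> bool" where
  "alg_indep3 a1 a2 a3 \<longleftrightarrow>
     (\<forall>p :: nat \<times> nat \<times> nat \<Rightarrow> int.
        finite {m. p m \<noteq> 0} \<longrightarrow>
        (\<Sum>(i,j,k)\<in>{m. p m \<noteq> 0}. of_int (p (i,j,k)) * a1 ^ i * a2 ^ j * a3 ^ k) = 0 \<longrightarrow>
        (\<forall>m. p m = 0))"

definition vertex_angle :: "real^2 \<Rightarrow> real^2 \<Rightarrow> real^2 \<Rightarrow> real" where
  "vertex_angle A B C = arccos (((A - B) \<bullet> (C - B)) / (norm (A - B) * norm (C - B)))"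

end

theory Submission
  imports Defs "HOL-Computational_Algebra.Polynomial"
begin


definition mon :: "real \<Rightarrow> real \<Rightarrow> real \<Rightarrow> nat\<times>nat\<times>nat \<Rightarrow> real" where
  "mon a b c m = a ^ fst m * b ^ fst (snd m) * c ^ snd (snd m)"

definition deg :: "nat\<times>nat\<times>nat \<Rightarrow> nat" where
  "deg m = fst m + fst (snd m) + snd (snd m)"

lemma alg_indep3_alt:
  "alg_indep3 a b c \<longleftrightarrow> (\<forall>p. finite {m. p m \<noteq> 0} \<longrightarrow>
     (\<Sum>m\<in>{m. p m \<noteq> 0}. of_int (p m) * mon a b c m) = 0 \<longrightarrow> (\<forall>m. p m = 0))"
proof -
  have "\<And>p. (\<Sum>(i,j,k)\<in>{m. p m \<noteq> 0}. of_int (p (i,j,k)) * a ^ i * b ^ j * c ^ k)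
     = (\<Sum>m\<in>{m. p m \<noteq> 0}. of_int (p m) * mon a b c m)"
    by (rule sum.cong) (auto simp: mon_def mult.assoc)
  then show ?thesis unfolding alg_indep3_def by auto
qed

lemma dep_witness:
  assumes "finite B" "\<And>m. m \<notin> B \<Longrightarrow> p m = 0" "(\<Sum>m\<in>B. of_int (p m) * mon a b c m) = 0" "p m0 \<noteq> 0"
  shows "\<not> alg_indep3 a b c"
proof -
  have sub: "{m. p m \<noteq> 0} \<subseteq> B" using assms(2) by blast
  have eq: "(\<Sum>m\<in>{m. p m \<noteq> 0}. of_int (p m) * mon a b c m) = (\<Sum>m\<in>B. of_int (p m) * mon a b c m)"
    by (rule sum.mono_neutral_left[OF assms(1) sub]) auto
  have fin: "finite {m. p m \<noteq> 0}" using finite_subset[OF sub assms(1)] .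
  show ?thesis unfolding alg_indep3_alt
  proof
    assume H: "\<forall>p. finite {m. p m \<noteq> 0} \<longrightarrow>
     (\<Sum>m\<in>{m. p m \<noteq> 0}. of_int (p m) * mon a b c m) = 0 \<longrightarrow> (\<forall>m. p m = 0)"
    have "\<forall>m. p m = 0" using H fin assms(3) eq by auto
    with assms(4) show False by blast
  qed
qed

interpretation Q: vector_space "\<lambda>(q::rat) (x::real). of_rat q * x"
  by unfold_locales (auto simp: algebra_simps of_rat_add of_rat_mult)

definition MM :: "real \<Rightarrow> real \<Rightarrow> real \<Rightarrow> real set \<Rightarrow> nat \<Rightarrow> real set" where
  "MM a b c E N = Q.span {mon a b c g * e | g e. deg g \<le> N \<and> e \<in> E}"

lemma MM_base: "deg g \<le> N \<Longrightarrow> e \<in> E \<Longrightarrow> mon a b c g * e \<in> MM a b c E N"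
  unfolding MM_def by (rule Q.span_base) blast

lemma MM_mono: "N \<le> N' \<Longrightarrow> MM a b c E N \<subseteq> MM a b c E N'"
  unfolding MM_def by (rule Q.span_mono) (blast intro: le_trans)

lemma MM_add: "x \<in> MM a b c E N \<Longrightarrow> y \<in> MM a b c E N \<Longrightarrow> x + y \<in> MM a b c E N"
  unfolding MM_def by (rule Q.span_add)

lemma MM_diff: "x \<in> MM a b c E N \<Longrightarrow> y \<in> MM a b c E N \<Longrightarrow> x - y \<in> MM a b c E N"
  unfolding MM_def by (rule Q.span_diff)

lemma MM_scale: "x \<in> MM a b c E N \<Longrightarrow> of_rat q * x \<in> MM a b c E N"
  unfolding MM_def by (rule Q.span_scale)

lemma MM_int: "x \<in> MM a b c E N \<Longrightarrow> of_int q * x \<in> MM a b c E N"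
  using MM_scale[of x a b c E N "of_int q"] by simp

lemma mon_add: "mon a b c (g + h) = mon a b c g * mon a b c h"
  by (simp add: mon_def power_add case_prod_beta)

lemma deg_add: "deg (g + h) = deg g + deg h"
  by (simp add: deg_def)

lemma MM_mult_mon:
  assumes "x \<in> MM a b c E N"
  shows "mon a b c h * x \<in> MM a b c E (N + deg h)"
proof -
  show ?thesis
    using assms[unfolded MM_def]
  proof (induction x rule: Q.span_induct)
    case (step x)
    then obtain g e where x: "x = mon a b c g * e" "deg g \<le> N" "e \<in> E" by blast
    have "mon a b c h * x = mon a b c (h + g) * e" by (simp add: x mon_add)
    moreover have "deg (h + g) \<le> N + deg h" using x by (simp add: deg_add)
    ultimately show ?case using x(3) MM_base[of "h+g" "N + deg h" e E a b c] by (simp add: MM_def)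
  next
    case base
    show ?case
    proof (rule Q.subspaceI)
      show "0 \<in> {x. mon a b c h * x \<in> MM a b c E (N + deg h)}"
        by (simp add: MM_def Q.span_zero)
    next
      fix x y assume "x \<in> {x. mon a b c h * x \<in> MM a b c E (N + deg h)}" "y \<in> {x. mon a b c h * x \<in> MM a b c E (N + deg h)}"
      then show "x + y \<in> {x. mon a b c h * x \<in> MM a b c E (N + deg h)}"
        by (simp add: distrib_left MM_add)
    next
      fix q x assume "x \<in> {x. mon a b c h * x \<in> MM a b c E (N + deg h)}"
      then show "of_rat q * x \<in> {x. mon a b c h * x \<in> MM a b c E (N + deg h)}"
        using MM_scale[of "mon a b c h * x" a b c E "N + deg h" q] by (simp add: algebra_simps)
    qed
  qed
qed



lemma MM_closure:
  assumes hz: "\<forall>e\<in>E. z * e \<in> MM a b c E k" and t: "t \<in> MM a b c E N"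
  shows "z * t \<in> MM a b c E (N + k)"
  using t[unfolded MM_def]
proof (induction t rule: Q.span_induct)
  case (step x)
  then obtain g e where x: "x = mon a b c g * e" "deg g \<le> N" "e \<in> E" by blast
  have zx: "z * x = mon a b c g * (z * e)" by (simp add: x algebra_simps)
  moreover have "mon a b c g * (z * e) \<in> MM a b c E (k + deg g)"
    using MM_mult_mon hz x(3) by blast
  moreover have C: "MM a b c E (k + deg g) \<subseteq> MM a b c E (N + k)" using x(2) by (intro MM_mono) simp
  ultimately have "mon a b c g * (z * e) \<in> MM a b c E (N + k)" by blast
  then show ?case by (simp only: zx)
next
  case base
  show ?case
  proof (rule Q.subspaceI)
    show "0 \<in> {x. z * x \<in> MM a b c E (N + k)}"
      by (simp add: MM_def Q.span_zero)
  next
    fix x y assume "x \<in> {x. z * x \<in> MM a b c E (N + k)}" "y \<in> {x. z * x \<in> MM a b c E (N + k)}"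
    then show "x + y \<in> {x. z * x \<in> MM a b c E (N + k)}"
      by (simp add: distrib_left MM_add)
  next
    fix q x assume "x \<in> {x. z * x \<in> MM a b c E (N + k)}"
    then show "of_rat q * x \<in> {x. z * x \<in> MM a b c E (N + k)}"
      using MM_scale[of "z * x" a b c E "N + k" q] by (simp add: algebra_simps)
  qed
qed

lemma MM_pow:
  assumes hz: "\<forall>e\<in>E. z * e \<in> MM a b c E k" and t: "t \<in> MM a b c E N"
  shows "z ^ n * t \<in> MM a b c E (N + n * k)"
proof (induction n)
  case 0 then show ?case using t by simp
next
  case (Suc n)
  have "z * (z ^ n * t) \<in> MM a b c E (N + n * k + k)" by (rule MM_closure[OF hz Suc])
  then show ?case by (simp add: algebra_simps)
qed

lemma MM_one: "1 \<in> E \<Longrightarrow> 1 \<in> MM a b c E 0"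
  using MM_base[of "(0,0,0)" 0 1 E a b c] by (simp add: mon_def deg_def)

lemma MM_mon:
  assumes "1 \<in> E"
    and h1: "\<forall>e\<in>E. x1 * e \<in> MM a b c E k"
    and h2: "\<forall>e\<in>E. x2 * e \<in> MM a b c E k"
    and h3: "\<forall>e\<in>E. x3 * e \<in> MM a b c E k"
  shows "mon x1 x2 x3 g \<in> MM a b c E (k * deg g)"
proof -
  obtain i j l where g: "g = (i,j,l)" by (cases g) auto
  have "x3 ^ l * 1 \<in> MM a b c E (0 + l * k)" by (rule MM_pow[OF h3 MM_one[OF assms(1)]])
  then have "x2 ^ j * (x3 ^ l * 1) \<in> MM a b c E (0 + l * k + j * k)" by (rule MM_pow[OF h2])
  then have "x1 ^ i * (x2 ^ j * (x3 ^ l * 1)) \<in> MM a b c E (0 + l * k + j * k + i * k)" by (rule MM_pow[OF h1])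
  then show ?thesis by (simp add: g mon_def deg_def algebra_simps)
qed

definition key :: "nat\<times>nat\<times>nat \<Rightarrow> nat\<times>nat\<times>nat" where
  "key g = (deg g, fst g, fst (snd g))"

definition lexR :: "((nat\<times>nat\<times>nat) \<times> (nat\<times>nat\<times>nat)) set" where
  "lexR = inv_image (less_than <*lex*> (less_than <*lex*> less_than)) key"

lemma wf_lexR: "wf lexR"
  unfolding lexR_def by (intro wf_inv_image wf_lex_prod wf_less_than)

lemma lexR_iff: "(g,h) \<in> lexR \<longleftrightarrow> deg g < deg h \<or> (deg g = deg h \<and> (fst g < fst h \<or> (fst g = fst h \<and> fst (snd g) < fst (snd h))))"
  unfolding lexR_def key_def by auto

lemma key_inj: "key g = key h \<Longrightarrow> g = h"
  unfolding key_def deg_def by (cases g; cases h) auto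

lemma lexR_total: "g \<noteq> h \<Longrightarrow> (g,h) \<in> lexR \<or> (h,g) \<in> lexR"
proof -
  assume "g \<noteq> h"
  then have "key g \<noteq> key h" using key_inj by blast
  then show ?thesis unfolding lexR_iff key_def by (simp; arith)
qed

lemma lexR_trans: "(g,h) \<in> lexR \<Longrightarrow> (h,l) \<in> lexR \<Longrightarrow> (g,l) \<in> lexR"
  unfolding lexR_iff by auto

lemma lexR_irrefl: "(g,g) \<notin> lexR"
  unfolding lexR_iff by auto

lemma lexR_add: "(g,h) \<in> lexR \<Longrightarrow> (d + g, d + h) \<in> lexR"
  unfolding lexR_iff by (cases d; cases g; cases h) (auto simp: deg_def)

lemma lexR_deg: "(g,h) \<in> lexR \<Longrightarrow> deg g \<le> deg h"
  unfolding lexR_iff by auto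

lemma lexR_max:
  assumes "finite S" "S \<noteq> {}"
  shows "\<exists>\<mu>\<in>S. \<forall>\<nu>\<in>S. \<nu> \<noteq> \<mu> \<longrightarrow> (\<nu>,\<mu>) \<in> lexR"
  using assms
proof (induction S rule: finite_ne_induct)
  case (singleton x) then show ?case by auto
next
  case (insert x F)
  then obtain \<mu> where mu: "\<mu> \<in> F" "\<forall>\<nu>\<in>F. \<nu> \<noteq> \<mu> \<longrightarrow> (\<nu>,\<mu>) \<in> lexR" by blast
  show ?case
  proof (cases "(x,\<mu>) \<in> lexR")
    case True then show ?thesis using mu by auto
  next
    case False
    then have "(\<mu>,x) \<in> lexR" using lexR_total[of x \<mu>] insert.hyps mu(1) by auto
    show ?thesis
    proof (intro bexI[of _ x] ballI impI)
      fix \<nu> assume "\<nu> \<in> insert x F" "\<nu> \<noteq> x"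
      then have "\<nu> \<in> F" by simp
      show "(\<nu>, x) \<in> lexR"
      proof (cases "\<nu> = \<mu>")
        case True then show ?thesis using \<open>(\<mu>,x) \<in> lexR\<close> by simp
      next
        case False then show ?thesis using mu(2) \<open>\<nu> \<in> F\<close> \<open>(\<mu>,x) \<in> lexR\<close> lexR_trans by blast
      qed
    qed simp
  qed
qed

definition dvdm :: "nat\<times>nat\<times>nat \<Rightarrow> nat\<times>nat\<times>nat \<Rightarrow> bool" where
  "dvdm m g \<longleftrightarrow> fst m \<le> fst g \<and> fst (snd m) \<le> fst (snd g) \<and> snd (snd m) \<le> snd (snd g)"

definition Std :: "nat \<Rightarrow> nat\<times>nat\<times>nat \<Rightarrow> (nat\<times>nat\<times>nat) set" where
  "Std N \<mu> = {g. deg g \<le> N \<and> \<not> dvdm \<mu> g}"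

lemma std_red:
  fixes r :: "nat\<times>nat\<times>nat \<Rightarrow> int"
  assumes fin: "finite {m. r m \<noteq> 0}" and rmu: "r \<mu> \<noteq> 0"
    and mx: "\<forall>\<nu>. r \<nu> \<noteq> 0 \<longrightarrow> \<nu> \<noteq> \<mu> \<longrightarrow> (\<nu>,\<mu>) \<in> lexR"
    and ev: "(\<Sum>m\<in>{m. r m \<noteq> 0}. of_int (r m) * mon a b c m) = 0"
  shows "deg \<gamma> \<le> N \<Longrightarrow> mon a b c \<gamma> \<in> Q.span (mon a b c ` Std N \<mu>)"
proof (induction \<gamma> rule: wf_induct[OF wf_lexR])
  case (1 \<gamma>)
  show ?case
  proof (cases "dvdm \<mu> \<gamma>")
    case False
    then have "\<gamma> \<in> Std N \<mu>" using 1(2) by (simp add: Std_def)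
    then show ?thesis by (intro Q.span_base) auto
  next
    case True
    obtain g1 g2 g3 where g: "\<gamma> = (g1,g2,g3)" by (cases \<gamma>) auto
    obtain m1 m2 m3 where m: "\<mu> = (m1,m2,m3)" by (cases \<mu>) auto
    define \<delta> where "\<delta> = (g1 - m1, g2 - m2, g3 - m3)"
    have gd: "\<gamma> = \<delta> + \<mu>" using True by (auto simp: g m \<delta>_def dvdm_def)
    define S where "S = {m. r m \<noteq> 0}"
    have muS: "\<mu> \<in> S" using rmu by (simp add: S_def)
    have "(\<Sum>m\<in>S. of_int (r m) * mon a b c m) = of_int (r \<mu>) * mon a b c \<mu> + (\<Sum>m\<in>S-{\<mu>}. of_int (r m) * mon a b c m)"
      using fin muS by (simp add: S_def sum.remove)
    then have eq: "of_int (r \<mu>) * mon a b c \<mu> = - (\<Sum>m\<in>S-{\<mu>}. of_int (r m) * mon a b c m)"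
      using ev by (simp add: S_def)
    have "of_int (r \<mu>) * mon a b c \<gamma> = mon a b c \<delta> * (of_int (r \<mu>) * mon a b c \<mu>)"
      by (simp add: gd mon_add)
    also have "\<dots> = mon a b c \<delta> * (- (\<Sum>m\<in>S-{\<mu>}. of_int (r m) * mon a b c m))"
      by (simp only: eq)
    also have "\<dots> = - (\<Sum>m\<in>S-{\<mu>}. mon a b c \<delta> * (of_int (r m) * mon a b c m))"
      by (simp add: sum_distrib_left)
    also have "\<dots> = - (\<Sum>m\<in>S-{\<mu>}. of_int (r m) * mon a b c (\<delta> + m))"
      by (rule arg_cong[where f=uminus], rule sum.cong) (simp_all add: mon_add)
    finally have eq2: "of_int (r \<mu>) * mon a b c \<gamma> = - (\<Sum>m\<in>S-{\<mu>}. of_int (r m) * mon a b c (\<delta> + m))" .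
    have "(\<Sum>m\<in>S-{\<mu>}. of_int (r m) * mon a b c (\<delta> + m)) \<in> Q.span (mon a b c ` Std N \<mu>)"
    proof (rule Q.span_sum)
      fix m assume mS: "m \<in> S - {\<mu>}"
      then have "r m \<noteq> 0" "m \<noteq> \<mu>" by (auto simp: S_def)
      then have "(m,\<mu>) \<in> lexR" using mx by blast
      then have lt: "(\<delta> + m, \<gamma>) \<in> lexR" unfolding gd by (rule lexR_add)
      moreover have "deg (\<delta> + m) \<le> N" using lexR_deg[OF lt] 1(2) by simp
      ultimately have "mon a b c (\<delta> + m) \<in> Q.span (mon a b c ` Std N \<mu>)" using 1(1) by blast
      then show "of_int (r m) * mon a b c (\<delta> + m) \<in> Q.span (mon a b c ` Std N \<mu>)"
        using Q.span_scale[of _ _ "of_int (r m)"] by simp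
    qed
    then have "of_int (r \<mu>) * mon a b c \<gamma> \<in> Q.span (mon a b c ` Std N \<mu>)"
      unfolding eq2 by (rule Q.span_neg)
    then have "of_rat (1 / of_int (r \<mu>)) * (of_int (r \<mu>) * mon a b c \<gamma>) \<in> Q.span (mon a b c ` Std N \<mu>)"
      by (rule Q.span_scale)
    moreover have "of_rat (1 / of_int (r \<mu>)) * (of_int (r \<mu>) * mon a b c \<gamma>) = mon a b c \<gamma>"
      using rmu by (simp add: of_rat_divide)
    ultimately show ?thesis by simp
  qed
qed

lemma card_Std: "card (Std N \<mu>) \<le> deg \<mu> * (N+1)^2"
proof -
  define A1 where "A1 = {..<fst \<mu>} \<times> {..N} \<times> {..N}"
  define A2 where "A2 = {..N} \<times> {..<fst (snd \<mu>)} \<times> {..N}"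
  define A3 where "A3 = {..N} \<times> {..N} \<times> {..<snd (snd \<mu>)}"
  have sub: "Std N \<mu> \<subseteq> A1 \<union> A2 \<union> A3"
    by (auto simp: Std_def A1_def A2_def A3_def dvdm_def deg_def)
  have "card (Std N \<mu>) \<le> card (A1 \<union> A2 \<union> A3)"
    by (rule card_mono[OF _ sub]) (simp add: A1_def A2_def A3_def)
  also have "\<dots> \<le> card A1 + card A2 + card A3"
    using card_Un_le[of "A1 \<union> A2" A3] card_Un_le[of A1 A2] by linarith
  also have "\<dots> = deg \<mu> * (N+1)^2"
    by (simp add: A1_def A2_def A3_def card_cartesian_product deg_def power2_eq_square algebra_simps)
  finally show ?thesis .
qed

lemma span_mult_right:
  assumes "t \<in> Q.span S"
  shows "t * e \<in> Q.span ((\<lambda>s. s * e) ` S)"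
  using assms
proof (induction t rule: Q.span_induct)
  case (step x) then show ?case by (intro Q.span_base) auto
next
  case base
  show ?case
  proof (rule Q.subspaceI)
    show "0 \<in> {t. t * e \<in> Q.span ((\<lambda>s. s * e) ` S)}" by (simp add: Q.span_zero)
  next
    fix x y assume "x \<in> {t. t * e \<in> Q.span ((\<lambda>s. s * e) ` S)}" "y \<in> {t. t * e \<in> Q.span ((\<lambda>s. s * e) ` S)}"
    then show "x + y \<in> {t. t * e \<in> Q.span ((\<lambda>s. s * e) ` S)}"
      by (simp add: distrib_right Q.span_add)
  next
    fix q x assume "x \<in> {t. t * e \<in> Q.span ((\<lambda>s. s * e) ` S)}"
    then show "of_rat q * x \<in> {t. t * e \<in> Q.span ((\<lambda>s. s * e) ` S)}"
      using Q.span_scale[of "x * e" _ q] by (simp add: mult.assoc)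
  qed
qed



lemma common_denom:
  assumes "finite F"
  shows "\<exists>d::int. d > 0 \<and> (\<forall>q\<in>F. \<exists>z. of_int d * q = (of_int z :: rat))"
  using assms
proof (induction F rule: finite_induct)
  case empty then show ?case by (intro exI[of _ 1]) auto
next
  case (insert q F)
  then obtain d where d: "d > 0" "\<forall>q\<in>F. \<exists>z. of_int d * q = (of_int z :: rat)" by blast
  obtain a b where ab: "quotient_of q = (a, b)" by (cases "quotient_of q") auto
  have b: "b > 0" using quotient_of_denom_pos[OF ab] .
  have q: "q = of_int a / of_int b" using quotient_of_div[OF ab] .
  show ?case
  proof (rule exI[of _ "d * b"], intro conjI ballI)
    show "d * b > 0" using d b by simp
  next
    fix q' assume "q' \<in> insert q F"
    then show "\<exists>z. of_int (d * b) * q' = (of_int z :: rat)"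
    proof (cases "q' = q")
      assume "q' = q"
      then have "of_int (d * b) * q' = of_int (d * a)" using b by (simp add: q)
      then show ?thesis by blast
    next
      assume "q' \<noteq> q"
      with \<open>q' \<in> insert q F\<close> have "q' \<in> F" by simp
      then obtain z where "of_int d * q' = (of_int z :: rat)" using d by blast
      then have "of_int (d * b) * q' = of_int (z * b)" by (simp add: algebra_simps)
      then show ?thesis by blast
    qed
  qed
qed

lemma MM_span_bound:
  fixes r :: "nat\<times>nat\<times>nat \<Rightarrow> int"
  assumes fin: "finite {m. r m \<noteq> 0}" and rmu: "r \<mu> \<noteq> 0"
    and mx: "\<forall>\<nu>. r \<nu> \<noteq> 0 \<longrightarrow> \<nu> \<noteq> \<mu> \<longrightarrow> (\<nu>,\<mu>) \<in> lexR"
    and ev: "(\<Sum>m\<in>{m. r m \<noteq> 0}. of_int (r m) * mon a b c m) = 0"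
    and finE: "finite E"
  shows "\<exists>T. finite T \<and> card T \<le> deg \<mu> * card E * (N+1)^2 \<and> MM a b c E N \<subseteq> Q.span T"
proof -
  define T where "T = (\<lambda>(s,e). s * e) ` (mon a b c ` Std N \<mu> \<times> E)"
  have finStd: "finite (Std N \<mu>)"
    by (rule finite_subset[of _ "{..N} \<times> {..N} \<times> {..N}"]) (auto simp: Std_def deg_def)
  have "card T \<le> card (mon a b c ` Std N \<mu> \<times> E)" unfolding T_def by (rule card_image_le) (use finStd finE in simp)
  also have "\<dots> = card (mon a b c ` Std N \<mu>) * card E" by (simp add: card_cartesian_product)
  also have "\<dots> \<le> card (Std N \<mu>) * card E" by (simp add: card_image_le finStd)
  also have "\<dots> \<le> deg \<mu> * (N+1)^2 * card E" using card_Std[of N \<mu>] by simp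
  finally have cT: "card T \<le> deg \<mu> * card E * (N+1)^2" by (simp add: algebra_simps)
  have "MM a b c E N \<subseteq> Q.span T"
    unfolding MM_def
  proof (rule Q.span_minimal[OF _ Q.subspace_span], rule subsetI)
    fix t assume "t \<in> {mon a b c g * e |g e. deg g \<le> N \<and> e \<in> E}"
    then obtain g e where t: "t = mon a b c g * e" "deg g \<le> N" "e \<in> E" by blast
    have "mon a b c g \<in> Q.span (mon a b c ` Std N \<mu>)" by (rule std_red[OF fin rmu mx ev t(2)])
    then have "mon a b c g * e \<in> Q.span ((\<lambda>s. s * e) ` (mon a b c ` Std N \<mu>))" by (rule span_mult_right)
    moreover have "(\<lambda>s. s * e) ` (mon a b c ` Std N \<mu>) \<subseteq> T" unfolding T_def using t(3) by force
    ultimately show "t \<in> Q.span T" using Q.span_mono t(1) by blast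
  qed
  moreover have "finite T" unfolding T_def using finStd finE by simp
  ultimately show ?thesis using cT by blast
qed



lemma dep_from_dependent:
  assumes fB: "finite B" and inj: "inj_on (mon x1 x2 x3) B"
    and dp: "Q.dependent (mon x1 x2 x3 ` B)"
  shows "\<not> alg_indep3 x1 x2 x3"
proof -
  let ?f = "mon x1 x2 x3"
  obtain T u where T: "finite T" "T \<subseteq> ?f ` B" "(\<Sum>v\<in>T. of_rat (u v) * v) = 0" and nz: "\<exists>v\<in>T. u v \<noteq> 0"
    using dp unfolding Q.dependent_explicit by blast
  obtain d :: int where d: "d > 0" "\<forall>q\<in>u ` T. \<exists>z. of_int d * q = (of_int z :: rat)"
    using common_denom[of "u ` T"] T(1) by blast
  define w where "w v = (SOME z. of_int d * u v = (of_int z :: rat))" for v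
  have w: "of_int d * u v = of_int (w v)" if "v \<in> T" for v
    unfolding w_def by (rule someI_ex) (use d that in blast)
  define B' where "B' = {\<beta>\<in>B. ?f \<beta> \<in> T}"
  have imB': "?f ` B' = T" using T(2) by (auto simp: B'_def)
  have injB': "inj_on ?f B'" using inj by (rule inj_on_subset) (auto simp: B'_def)
  define p where "p \<beta> = (if \<beta> \<in> B' then w (?f \<beta>) else 0)" for \<beta>
  have "(\<Sum>\<beta>\<in>B. of_int (p \<beta>) * ?f \<beta>) = (\<Sum>\<beta>\<in>B'. of_int (p \<beta>) * ?f \<beta>)"
    by (rule sum.mono_neutral_right) (use fB in \<open>auto simp: p_def B'_def\<close>)
  also have "\<dots> = (\<Sum>\<beta>\<in>B'. of_int (w (?f \<beta>)) * ?f \<beta>)"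
    by (rule sum.cong) (auto simp: p_def)
  also have "\<dots> = (\<Sum>v\<in>T. of_int (w v) * v)"
    using sum.reindex[OF injB', of "\<lambda>v. of_int (w v) * v"] imB' by simp
  also have "\<dots> = (\<Sum>v\<in>T. of_int d * (of_rat (u v) * v))"
  proof (rule sum.cong)
    fix v assume "v \<in> T"
    have "(of_int (w v) :: real) = of_rat (of_int (w v))" by simp
    also have "\<dots> = of_rat (of_int d * u v)" using w[OF \<open>v \<in> T\<close>] by simp
    also have "\<dots> = of_int d * of_rat (u v)" by (simp add: of_rat_mult)
    finally show "of_int (w v) * v = of_int d * (of_rat (u v) * v)" by simp
  qed simp
  also have "\<dots> = 0" using T(3) by (simp add: sum_distrib_left[symmetric])
  finally have ev: "(\<Sum>\<beta>\<in>B. of_int (p \<beta>) * ?f \<beta>) = 0" .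
  obtain v where v: "v \<in> T" "u v \<noteq> 0" using nz by blast
  obtain \<beta> where \<beta>: "\<beta> \<in> B'" "?f \<beta> = v" using imB' v(1) by blast
  have "rat_of_int d * u v \<noteq> 0" using v(2) d(1) by simp
  then have "rat_of_int (w v) \<noteq> 0" using w[OF v(1)] by simp
  then have "p \<beta> \<noteq> 0" using \<beta> by (simp add: p_def)
  show ?thesis
    by (rule dep_witness[OF fB _ ev \<open>p \<beta> \<noteq> 0\<close>]) (auto simp: p_def B'_def)
qed

lemma dep_from_noninj:
  assumes "g \<noteq> h" "mon x1 x2 x3 g = mon x1 x2 x3 h"
  shows "\<not> alg_indep3 x1 x2 x3"
proof -
  define p where "p m = (if m = g then 1 else if m = h then -1 else (0::int))" for m
  have "(\<Sum>m\<in>{g,h}. of_int (p m) * mon x1 x2 x3 m) = 0"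
    using assms by (simp add: p_def)
  moreover have "p g \<noteq> 0" by (simp add: p_def)
  ultimately show ?thesis
    by (intro dep_witness[of "{g,h}" p]) (auto simp: p_def)
qed

lemma T1:
  assumes dep: "\<not> alg_indep3 y1 y2 y3" and finE: "finite E" and oneE: "1 \<in> E"
    and h1: "\<forall>e\<in>E. x1 * e \<in> MM y1 y2 y3 E k"
    and h2: "\<forall>e\<in>E. x2 * e \<in> MM y1 y2 y3 E k"
    and h3: "\<forall>e\<in>E. x3 * e \<in> MM y1 y2 y3 E k"
  shows "\<not> alg_indep3 x1 x2 x3"
proof -
  obtain r where r: "finite {m. r m \<noteq> 0}" "(\<Sum>m\<in>{m. r m \<noteq> 0}. of_int (r m) * mon y1 y2 y3 m) = 0"
    "\<exists>m. r m \<noteq> 0"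
    using dep unfolding alg_indep3_alt by blast
  obtain \<mu> where mu: "\<mu> \<in> {m. r m \<noteq> 0}" "\<forall>\<nu>\<in>{m. r m \<noteq> 0}. \<nu> \<noteq> \<mu> \<longrightarrow> (\<nu>,\<mu>) \<in> lexR"
    using lexR_max[OF r(1)] r(3) by blast
  have rmu: "r \<mu> \<noteq> 0" and mx: "\<forall>\<nu>. r \<nu> \<noteq> 0 \<longrightarrow> \<nu> \<noteq> \<mu> \<longrightarrow> (\<nu>,\<mu>) \<in> lexR" using mu by auto
  define K where "K = deg \<mu> * card E"
  define D where "D = K * (3*k+1)^2"
  define N where "N = k * (3 * D)"
  obtain T where T: "finite T" "card T \<le> K * (N+1)^2" "MM y1 y2 y3 E N \<subseteq> Q.span T"
    using MM_span_bound[OF r(1) rmu mx r(2) finE, of N] unfolding K_def by blast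
  define Box where "Box = {..D} \<times> {..D} \<times> {..D}"
  have fBox: "finite Box" by (simp add: Box_def)
  have cBox: "card Box = (D+1)^3" by (simp add: Box_def card_cartesian_product power3_eq_cube)
  have inMM: "mon x1 x2 x3 \<beta> \<in> MM y1 y2 y3 E N" if "\<beta> \<in> Box" for \<beta>
  proof -
    have "mon x1 x2 x3 \<beta> \<in> MM y1 y2 y3 E (k * deg \<beta>)" by (rule MM_mon[OF oneE h1 h2 h3])
    moreover have "k * deg \<beta> \<le> N" using that by (auto simp: Box_def deg_def N_def)
    ultimately show ?thesis using MM_mono by blast
  qed
  show ?thesis
  proof (cases "inj_on (mon x1 x2 x3) Box")
    case False
    then obtain g h where "g \<noteq> h" "mon x1 x2 x3 g = mon x1 x2 x3 h" unfolding inj_on_def by blast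
    then show ?thesis by (rule dep_from_noninj)
  next
    case True
    show ?thesis
    proof (rule dep_from_dependent[OF fBox True], rule ccontr)
      assume ind: "\<not> Q.dependent (mon x1 x2 x3 ` Box)"
      have sub: "mon x1 x2 x3 ` Box \<subseteq> Q.span T" using inMM T(3) by blast
      have "card (mon x1 x2 x3 ` Box) \<le> card T"
        using Q.independent_span_bound[OF T(1) ind sub] by simp
      then have "(D+1)^3 \<le> K * (N+1)^2" using T(2) card_image[OF True] cBox by simp
      moreover have "N + 1 \<le> (3*k+1) * (D+1)" by (simp add: N_def algebra_simps)
      then have "K * (N+1)^2 \<le> K * ((3*k+1) * (D+1))^2" by (intro mult_left_mono power_mono) auto
      moreover have "K * ((3*k+1) * (D+1))^2 = D * (D+1)^2"
        by (simp only: power_mult_distrib mult.assoc[symmetric] D_def[symmetric])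
      moreover have "D * (D+1)^2 < (D+1)^3" by (simp add: power3_eq_cube power2_eq_square)
      ultimately show False by linarith
    qed
  qed
qed



lemma mon_scale: "mon (k*a) (k*b) (k*c) m = k ^ deg m * mon a b c m"
  by (cases m) (simp add: mon_def deg_def power_mult_distrib power_add)

lemma ae_indep:
  assumes k0: "alg_indep3 (k0*a1) (k0*a2) (k0*a3)"
  shows "AE k in lborel. alg_indep3 (k*a1) (k*a2) (k*a3)"
proof -
  define NZ where "NZ = {p :: nat\<times>nat\<times>nat \<Rightarrow> int. finite {m. p m \<noteq> 0} \<and> (\<exists>m. p m \<noteq> 0)}"
  define Qp :: "(nat\<times>nat\<times>nat \<Rightarrow> int) \<Rightarrow> real poly"
    where "Qp p = (\<Sum>m\<in>{m. p m \<noteq> 0}. monom (of_int (p m) * mon a1 a2 a3 m) (deg m))" for p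
  have polyQ: "poly (Qp p) k = (\<Sum>m\<in>{m. p m \<noteq> 0}. of_int (p m) * mon (k*a1) (k*a2) (k*a3) m)" for p k
    unfolding Qp_def poly_sum poly_monom by (rule sum.cong) (simp_all add: mon_scale)
  have Qnz: "Qp p \<noteq> 0" if "p \<in> NZ" for p
  proof
    assume "Qp p = 0"
    then have "(\<Sum>m\<in>{m. p m \<noteq> 0}. of_int (p m) * mon (k0*a1) (k0*a2) (k0*a3) m) = 0"
      using polyQ[of p k0] by simp
    then show False using k0 that unfolding alg_indep3_alt NZ_def by blast
  qed
  define U where "U = (\<Union>p\<in>NZ. {k. poly (Qp p) k = 0})"
  have cNZ: "countable NZ"
  proof (rule countable_image_inj_on)
    let ?g = "\<lambda>p::nat\<times>nat\<times>nat \<Rightarrow> int. (\<lambda>m. (m, p m)) ` {m. p m \<noteq> 0}"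
    show "countable (?g ` NZ)"
      by (rule countable_subset[OF _ countable_Collect_finite]) (auto simp: NZ_def)
    show "inj_on ?g NZ"
    proof (rule inj_onI)
      fix p q assume eq: "?g p = ?g q"
      have "p m = q m" for m
      proof (cases "p m = 0")
        case False
        then have "(m, p m) \<in> ?g p" by blast
        then have "(m, p m) \<in> ?g q" using eq by simp
        then show ?thesis by auto
      next
        case True
        show ?thesis
        proof (rule ccontr)
          assume "p m \<noteq> q m"
          then have "q m \<noteq> 0" using True by simp
          then have "(m, q m) \<in> ?g q" by blast
          then have "(m, q m) \<in> ?g p" using eq by simp
          then show False using \<open>p m \<noteq> q m\<close> by auto
        qed
      qed
      then show "p = q" by blast
    qed
  qed
  have "countable U" unfolding U_def
    using cNZ by (intro countable_UN) (auto intro!: countable_finite poly_roots_finite Qnz)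
  then have nU: "U \<in> null_sets lborel" by (rule countable_imp_null_set_lborel)
  show ?thesis
  proof (rule AE_I'[OF nU], rule subsetI)
    fix k assume "k \<in> {k \<in> space lborel. \<not> alg_indep3 (k*a1) (k*a2) (k*a3)}"
    then obtain p where p: "finite {m. p m \<noteq> 0}"
      "(\<Sum>m\<in>{m. p m \<noteq> 0}. of_int (p m) * mon (k*a1) (k*a2) (k*a3) m) = 0" "\<exists>m. p m \<noteq> 0"
      unfolding alg_indep3_alt by blast
    then have "p \<in> NZ" "poly (Qp p) k = 0" using polyQ[of p k] by (auto simp: NZ_def)
    then show "k \<in> U" unfolding U_def by blast
  qed
qed

lemma ae_exists_pos:
  fixes P :: "real \<Rightarrow> bool"
  assumes "AE k in lborel. P k"
  shows "\<exists>k>0. P k"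
proof (rule ccontr)
  assume "\<not> (\<exists>k>0. P k)"
  from assms obtain N where N: "{x \<in> space lborel. \<not> P x} \<subseteq> N" "emeasure lborel N = 0" "N \<in> sets lborel"
    by (rule AE_E)
  have "{0<..<1::real} \<subseteq> N" using N(1) \<open>\<not> (\<exists>k>0. P k)\<close> by auto
  then have "emeasure lborel {0<..<1::real} \<le> emeasure lborel N"
    by (intro emeasure_mono N(3))
  then show False using N(2) by simp
qed



lemma MM_mon1: "deg g \<le> N \<Longrightarrow> e \<in> E \<Longrightarrow> mon a b c g * e \<in> MM a b c E N" by (rule MM_base)

lemma dirB:
  fixes s1 s2 s3 c1 c2 c3 t :: real
  assumes ds: "\<forall>k. \<not> alg_indep3 (k * s1) (k * s2) (k * s3)"
    and nz: "s1 \<noteq> 0" "s2 \<noteq> 0" "s3 \<noteq> 0"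
    and cc1: "c1 = s1 * (s2^2 + s3^2 - s1^2) / (2 * s1 * s2 * s3)"
    and cc2: "c2 = s2 * (s1^2 + s3^2 - s2^2) / (2 * s1 * s2 * s3)"
    and cc3: "c3 = s3 * (s1^2 + s2^2 - s3^2) / (2 * s1 * s2 * s3)"
  shows "\<not> alg_indep3 (t * c1) (t * c2) (t * c3)"
proof -
  define k where "k = root 3 (t / (2 * s1 * s2 * s3))"
  have k3: "k^3 = t / (2 * s1 * s2 * s3)" unfolding k_def by (simp add: odd_real_root_pow)
  define y1 where "y1 = k * s1"
  define y2 where "y2 = k * s2"
  define y3 where "y3 = k * s3"
  have x1: "t * c1 = y1 * (y2^2 + y3^2 - y1^2)"
  proof -
    have "y1 * (y2^2 + y3^2 - y1^2) = k^3 * (s1 * (s2^2 + s3^2 - s1^2))"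
      by (simp add: y1_def y2_def y3_def power2_eq_square power3_eq_cube algebra_simps)
    also have "\<dots> = t * c1" using nz by (simp add: k3 cc1)
    finally show ?thesis by simp
  qed
  have x2: "t * c2 = y2 * (y1^2 + y3^2 - y2^2)"
  proof -
    have "y2 * (y1^2 + y3^2 - y2^2) = k^3 * (s2 * (s1^2 + s3^2 - s2^2))"
      by (simp add: y1_def y2_def y3_def power2_eq_square power3_eq_cube algebra_simps)
    also have "\<dots> = t * c2" using nz by (simp add: k3 cc2)
    finally show ?thesis by simp
  qed
  have x3: "t * c3 = y3 * (y1^2 + y2^2 - y3^2)"
  proof -
    have "y3 * (y1^2 + y2^2 - y3^2) = k^3 * (s3 * (s1^2 + s2^2 - s3^2))"
      by (simp add: y1_def y2_def y3_def power2_eq_square power3_eq_cube algebra_simps)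
    also have "\<dots> = t * c3" using nz by (simp add: k3 cc3)
    finally show ?thesis by simp
  qed
  have dy: "\<not> alg_indep3 y1 y2 y3" using ds unfolding y1_def y2_def y3_def by blast
  let ?M = "MM y1 y2 y3 {1} 3"
  have m: "mon y1 y2 y3 g \<in> ?M" if "deg g \<le> 3" for g
    using MM_base[OF that, of 1 "{1}" y1 y2 y3] by simp
  have h1: "\<forall>e\<in>{1}. t * c1 * e \<in> ?M"
  proof -
    have "t * c1 = mon y1 y2 y3 (1,2,0) + mon y1 y2 y3 (1,0,2) - mon y1 y2 y3 (3,0,0)"
      unfolding x1 by (simp add: mon_def algebra_simps power2_eq_square power3_eq_cube)
    then show ?thesis using m[of "(1,2,0)"] m[of "(1,0,2)"] m[of "(3,0,0)"]
      by (simp add: deg_def MM_add MM_diff)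
  qed
  have h2: "\<forall>e\<in>{1}. t * c2 * e \<in> ?M"
  proof -
    have "t * c2 = mon y1 y2 y3 (2,1,0) + mon y1 y2 y3 (0,1,2) - mon y1 y2 y3 (0,3,0)"
      unfolding x2 by (simp add: mon_def algebra_simps power2_eq_square power3_eq_cube)
    then show ?thesis using m[of "(2,1,0)"] m[of "(0,1,2)"] m[of "(0,3,0)"]
      by (simp add: deg_def MM_add MM_diff)
  qed
  have h3: "\<forall>e\<in>{1}. t * c3 * e \<in> ?M"
  proof -
    have "t * c3 = mon y1 y2 y3 (2,0,1) + mon y1 y2 y3 (0,2,1) - mon y1 y2 y3 (0,0,3)"
      unfolding x3 by (simp add: mon_def algebra_simps power2_eq_square power3_eq_cube)
    then show ?thesis using m[of "(2,0,1)"] m[of "(0,2,1)"] m[of "(0,0,3)"]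
      by (simp add: deg_def MM_add MM_diff)
  qed
  show ?thesis by (rule T1[OF dy _ _ h1 h2 h3]) auto
qed



lemma dirA:
  fixes c1 c2 c3 s1 s2 s3 t :: real
  assumes R: "c1^2 + c2^2 + c3^2 + 2 * c1 * c2 * c3 = 1"
    and S1: "s1^2 = 1 - c1^2" and S2: "s2^2 = 1 - c2^2" and S3: "s3^2 = 1 - c3^2"
    and dc: "\<forall>k. \<not> alg_indep3 (k * c1) (k * c2) (k * c3)"
  shows "\<not> alg_indep3 (t * s1) (t * s2) (t * s3)"
proof -
  define y1 where "y1 = t * c1"
  define y2 where "y2 = t * c2"
  define y3 where "y3 = t * c3"
  define x1 where "x1 = t * s1"
  define x2 where "x2 = t * s2"
  define x3 where "x3 = t * s3"
  have xsq1: "x1^2 = t^2 - y1^2" unfolding x1_def y1_def by (simp add: power_mult_distrib S1 algebra_simps)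
  have xsq2: "x2^2 = t^2 - y2^2" unfolding x2_def y2_def by (simp add: power_mult_distrib S2 algebra_simps)
  have xsq3: "x3^2 = t^2 - y3^2" unfolding x3_def y3_def by (simp add: power_mult_distrib S3 algebra_simps)
  have t3: "t^3 = (y1^2 + y2^2 + y3^2) * t + 2 * (y1 * y2 * y3)"
  proof -
    have "t^3 = t^3 * (c1^2 + c2^2 + c3^2 + 2 * c1 * c2 * c3)" using R by simp
    also have "\<dots> = (y1^2 + y2^2 + y3^2) * t + 2 * (y1 * y2 * y3)"
      by (simp add: y1_def y2_def y3_def power2_eq_square power3_eq_cube algebra_simps)
    finally show ?thesis .
  qed
  define f where "f j e1 e2 e3 = t^j * x1^e1 * x2^e2 * x3^e3" for j e1 e2 e3 :: nat
  define E where "E = (\<lambda>(j,e1,e2,e3). f j e1 e2 e3) ` ({..<3} \<times> {..<2} \<times> {..<2} \<times> {..<2})"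
  have finE: "finite E" unfolding E_def by simp
  have oneE: "1 \<in> E" unfolding E_def by (rule image_eqI[of _ _ "(0,0,0,0)"]) (auto simp: f_def)
  have fE: "f j e1 e2 e3 \<in> E" if "j < 3" "e1 < 2" "e2 < 2" "e3 < 2" for j e1 e2 e3
    unfolding E_def using that by (intro image_eqI[of _ _ "(j,e1,e2,e3)"]) auto
  let ?M = "MM y1 y2 y3 E"
  have L2: "mon y1 y2 y3 g * f j e1 e2 e3 \<in> ?M N"
    if "j < 3" "e1 < 2" "e2 < 2" "e3 < 2" "deg g \<le> N" for j e1 e2 e3 g N
    by (rule MM_base[OF that(5) fE[OF that(1-4)]])
  have L0: "f j e1 e2 e3 \<in> ?M N" if "j < 3" "e1 < 2" "e2 < 2" "e3 < 2" for j e1 e2 e3 N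
    using L2[OF that, of "(0,0,0)" N] by (simp add: mon_def deg_def)
  have L1: "f j e1 e2 e3 \<in> ?M 3" if "j \<le> 4" "e1 < 2" "e2 < 2" "e3 < 2" for j e1 e2 e3
  proof -
    have A: "mon y1 y2 y3 (2,0,0) * f i e1 e2 e3 + mon y1 y2 y3 (0,2,0) * f i e1 e2 e3
       + mon y1 y2 y3 (0,0,2) * f i e1 e2 e3 + (mon y1 y2 y3 (1,1,1) * f i' e1 e2 e3
       + mon y1 y2 y3 (1,1,1) * f i' e1 e2 e3) \<in> ?M 3" if "i < 3" "i' < 3" for i i'
      using L2[OF that(1) \<open>e1<2\<close> \<open>e2<2\<close> \<open>e3<2\<close>, of "(2,0,0)" 3]
        L2[OF that(1) \<open>e1<2\<close> \<open>e2<2\<close> \<open>e3<2\<close>, of "(0,2,0)" 3]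
        L2[OF that(1) \<open>e1<2\<close> \<open>e2<2\<close> \<open>e3<2\<close>, of "(0,0,2)" 3]
        L2[OF that(2) \<open>e1<2\<close> \<open>e2<2\<close> \<open>e3<2\<close>, of "(1,1,1)" 3]
      by (intro MM_add) (simp_all add: deg_def)
    have "j < 3 \<or> j = 3 \<or> j = 4" using that(1) by auto
    then show ?thesis
    proof (elim disjE)
      assume "j < 3" then show ?thesis using L0 that by blast
    next
      assume j: "j = 3"
      have "f j e1 e2 e3 = mon y1 y2 y3 (2,0,0) * f 1 e1 e2 e3 + mon y1 y2 y3 (0,2,0) * f 1 e1 e2 e3
       + mon y1 y2 y3 (0,0,2) * f 1 e1 e2 e3 + (mon y1 y2 y3 (1,1,1) * f 0 e1 e2 e3
       + mon y1 y2 y3 (1,1,1) * f 0 e1 e2 e3)"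
        unfolding j f_def by (simp only: t3) (simp add: mon_def algebra_simps)
      then show ?thesis using A[of 1 0] by simp
    next
      assume j: "j = 4"
      have "f j e1 e2 e3 = mon y1 y2 y3 (2,0,0) * f 2 e1 e2 e3 + mon y1 y2 y3 (0,2,0) * f 2 e1 e2 e3
       + mon y1 y2 y3 (0,0,2) * f 2 e1 e2 e3 + (mon y1 y2 y3 (1,1,1) * f 1 e1 e2 e3
       + mon y1 y2 y3 (1,1,1) * f 1 e1 e2 e3)"
      proof -
        have "f j e1 e2 e3 = t * t^3 * x1^e1 * x2^e2 * x3^e3" unfolding j f_def by (simp add: power_Suc[symmetric] del: power_Suc)
        also have "\<dots> = mon y1 y2 y3 (2,0,0) * f 2 e1 e2 e3 + mon y1 y2 y3 (0,2,0) * f 2 e1 e2 e3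
       + mon y1 y2 y3 (0,0,2) * f 2 e1 e2 e3 + (mon y1 y2 y3 (1,1,1) * f 1 e1 e2 e3
       + mon y1 y2 y3 (1,1,1) * f 1 e1 e2 e3)"
          unfolding f_def by (simp only: t3) (simp add: mon_def power2_eq_square algebra_simps)
        finally show ?thesis .
      qed
      then show ?thesis using A[of 2 1] by simp
    qed
  qed
  have eq1: "x1 * f j 0 e2 e3 = f j 1 e2 e3" "x1 * f j 1 e2 e3 = f (j+2) 0 e2 e3 - mon y1 y2 y3 (2,0,0) * f j 0 e2 e3"
    and eq2: "x2 * f j e1 0 e3 = f j e1 1 e3" "x2 * f j e1 1 e3 = f (j+2) e1 0 e3 - mon y1 y2 y3 (0,2,0) * f j e1 0 e3"
    and eq3: "x3 * f j e1 e2 0 = f j e1 e2 1" "x3 * f j e1 e2 1 = f (j+2) e1 e2 0 - mon y1 y2 y3 (0,0,2) * f j e1 e2 0"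
    for j e1 e2 e3
  proof -
    show "x1 * f j 0 e2 e3 = f j 1 e2 e3" "x2 * f j e1 0 e3 = f j e1 1 e3" "x3 * f j e1 e2 0 = f j e1 e2 1"
      by (simp_all add: f_def algebra_simps)
    have "x1 * f j 1 e2 e3 = t^j * x1^2 * x2^e2 * x3^e3" by (simp add: f_def power2_eq_square algebra_simps)
    also have "\<dots> = f (j+2) 0 e2 e3 - mon y1 y2 y3 (2,0,0) * f j 0 e2 e3"
      unfolding xsq1 by (simp add: f_def mon_def power_add power2_eq_square algebra_simps)
    finally show "x1 * f j 1 e2 e3 = f (j+2) 0 e2 e3 - mon y1 y2 y3 (2,0,0) * f j 0 e2 e3" .
    have "x2 * f j e1 1 e3 = t^j * x1^e1 * x2^2 * x3^e3" by (simp add: f_def power2_eq_square algebra_simps)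
    also have "\<dots> = f (j+2) e1 0 e3 - mon y1 y2 y3 (0,2,0) * f j e1 0 e3"
      unfolding xsq2 by (simp add: f_def mon_def power_add power2_eq_square algebra_simps)
    finally show "x2 * f j e1 1 e3 = f (j+2) e1 0 e3 - mon y1 y2 y3 (0,2,0) * f j e1 0 e3" .
    have "x3 * f j e1 e2 1 = t^j * x1^e1 * x2^e2 * x3^2" by (simp add: f_def power2_eq_square algebra_simps)
    also have "\<dots> = f (j+2) e1 e2 0 - mon y1 y2 y3 (0,0,2) * f j e1 e2 0"
      unfolding xsq3 by (simp add: f_def mon_def power_add power2_eq_square algebra_simps)
    finally show "x3 * f j e1 e2 1 = f (j+2) e1 e2 0 - mon y1 y2 y3 (0,0,2) * f j e1 e2 0" .
  qed
  have h1: "\<forall>e\<in>E. x1 * e \<in> ?M 3"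
  proof
    fix e assume "e \<in> E"
    then obtain j e1 e2 e3 where jj: "j<3" "e1<2" "e2<2" "e3<2" "e = f j e1 e2 e3" unfolding E_def by auto
    have j2: "j + 2 \<le> 4" using jj by simp
    have "e1 = 0 \<or> e1 = 1" using jj by auto
    then show "x1 * e \<in> ?M 3"
    proof
      assume "e1 = 0"
      then show ?thesis using L0[of j] jj by (simp add: eq1)
    next
      assume "e1 = 1"
      have "f (j+2) 0 e2 e3 \<in> ?M 3" using L1[OF j2] jj by simp
      moreover have "mon y1 y2 y3 (2,0,0) * f j 0 e2 e3 \<in> ?M 3" using L2[of j, OF jj(1)] jj by (simp add: deg_def)
      ultimately show ?thesis unfolding jj(5) \<open>e1 = 1\<close> eq1(2) by (rule MM_diff)
    qed
  qed
  have h2: "\<forall>e\<in>E. x2 * e \<in> ?M 3"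
  proof
    fix e assume "e \<in> E"
    then obtain j e1 e2 e3 where jj: "j<3" "e1<2" "e2<2" "e3<2" "e = f j e1 e2 e3" unfolding E_def by auto
    have j2: "j + 2 \<le> 4" using jj by simp
    have "e2 = 0 \<or> e2 = 1" using jj by auto
    then show "x2 * e \<in> ?M 3"
    proof
      assume "e2 = 0"
      then show ?thesis using L0[of j] jj by (simp add: eq2)
    next
      assume "e2 = 1"
      have "f (j+2) e1 0 e3 \<in> ?M 3" using L1[OF j2] jj by simp
      moreover have "mon y1 y2 y3 (0,2,0) * f j e1 0 e3 \<in> ?M 3" using L2[of j, OF jj(1)] jj by (simp add: deg_def)
      ultimately show ?thesis unfolding jj(5) \<open>e2 = 1\<close> eq2(2) by (rule MM_diff)
    qed
  qed
  have h3: "\<forall>e\<in>E. x3 * e \<in> ?M 3"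
  proof
    fix e assume "e \<in> E"
    then obtain j e1 e2 e3 where jj: "j<3" "e1<2" "e2<2" "e3<2" "e = f j e1 e2 e3" unfolding E_def by auto
    have j2: "j + 2 \<le> 4" using jj by simp
    have "e3 = 0 \<or> e3 = 1" using jj by auto
    then show "x3 * e \<in> ?M 3"
    proof
      assume "e3 = 0"
      then show ?thesis using L0[of j] jj by (simp add: eq3)
    next
      assume "e3 = 1"
      have "f (j+2) e1 e2 0 \<in> ?M 3" using L1[OF j2] jj by simp
      moreover have "mon y1 y2 y3 (0,0,2) * f j e1 e2 0 \<in> ?M 3" using L2[of j, OF jj(1)] jj by (simp add: deg_def)
      ultimately show ?thesis unfolding jj(5) \<open>e3 = 1\<close> eq3(2) by (rule MM_diff)
    qed
  qed
  have dy: "\<not> alg_indep3 y1 y2 y3" using dc unfolding y1_def y2_def y3_def by blast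
  show ?thesis using T1[OF dy finE oneE h1 h2 h3] unfolding x1_def x2_def x3_def .
qed



lemma vertex_facts:
  fixes A B C :: "real^2"
  assumes nc: "\<not> collinear {A, B, C}"
  shows "cos (vertex_angle A B C) = ((dist A B)^2 + (dist B C)^2 - (dist A C)^2) / (2 * dist A B * dist B C)"
    and "sin (vertex_angle A B C) = sqrt (1 - (cos (vertex_angle A B C))^2)"
    and "(cos (vertex_angle A B C))^2 < 1"
    and "dist A B > 0" "dist B C > 0"
proof -
  define u where "u = A - B"
  define v where "v = C - B"
  have AB: "A \<noteq> B" using nc by auto
  have CB: "C \<noteq> B" using nc by auto
  have nu: "norm u = dist A B" by (simp add: u_def dist_norm)
  have nv: "norm v = dist B C" by (simp add: v_def dist_norm norm_minus_commute)
  have pu: "norm u > 0" using AB by (simp add: u_def)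
  have pv: "norm v > 0" using CB by (simp add: v_def)
  have "collinear {A, B, C} \<longleftrightarrow> collinear {0, A - B, C - B}"
    using collinear_3[of A B C] by (simp add: NO_MATCH_def)
  then have ncol: "\<not> collinear {0, u, v}" using nc by (simp add: u_def v_def)
  have le: "\<bar>u \<bullet> v\<bar> \<le> norm u * norm v" by (rule Cauchy_Schwarz_ineq2)
  have ne: "\<bar>u \<bullet> v\<bar> \<noteq> norm u * norm v" using ncol norm_cauchy_schwarz_equal by blast
  have lt: "\<bar>u \<bullet> v\<bar> < norm u * norm v" using le ne by simp
  define c where "c = (u \<bullet> v) / (norm u * norm v)"
  have va: "vertex_angle A B C = arccos c" by (simp add: vertex_angle_def c_def u_def v_def)
  have cabs: "\<bar>c\<bar> < 1" using lt pu pv by (simp add: c_def abs_divide abs_mult divide_less_eq)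
  have cc: "cos (vertex_angle A B C) = c" using cabs by (simp add: va cos_arccos_abs)
  have dot: "u \<bullet> v = ((dist A B)^2 + (dist B C)^2 - (dist A C)^2) / 2"
  proof -
    have "A - C = u - v" by (simp add: u_def v_def)
    then have "(dist A C)^2 = norm u ^2 + norm v^2 - 2 * (u \<bullet> v)"
      by (simp add: dist_norm power2_norm_eq_inner inner_diff_left inner_diff_right inner_commute)
    then show ?thesis using nu nv by simp
  qed
  show "cos (vertex_angle A B C) = ((dist A B)^2 + (dist B C)^2 - (dist A C)^2) / (2 * dist A B * dist B C)"
    by (simp add: cc c_def dot nu nv)
  show "sin (vertex_angle A B C) = sqrt (1 - (cos (vertex_angle A B C))^2)"
    using cabs by (simp add: va cc sin_arccos)
  show "(cos (vertex_angle A B C))^2 < 1" using cabs by (simp add: cc abs_square_less_1)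
  show "dist A B > 0" "dist B C > 0" using AB CB by auto
qed



lemma tri_alg:
  fixes l1 l2 l3 c1 c2 c3 s1 s2 s3 :: real
  assumes pos: "l1 > 0" "l2 > 0" "l3 > 0"
    and c1: "c1 = (l3^2 + l2^2 - l1^2) / (2 * l3 * l2)"
    and c2: "c2 = (l3^2 + l1^2 - l2^2) / (2 * l3 * l1)"
    and c3: "c3 = (l2^2 + l1^2 - l3^2) / (2 * l2 * l1)"
    and s1: "s1 = sqrt (1 - c1^2)" and s2: "s2 = sqrt (1 - c2^2)" and s3: "s3 = sqrt (1 - c3^2)"
    and lt: "c1^2 < 1"
  shows "\<exists>\<rho>>0. s1 = \<rho> * l1 \<and> s2 = \<rho> * l2 \<and> s3 = \<rho> * l3"
    and "c1^2 + c2^2 + c3^2 + 2 * c1 * c2 * c3 = 1"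
    and "s1 \<noteq> 0" "s2 \<noteq> 0" "s3 \<noteq> 0"
    and "c1 = s1 * (s2^2 + s3^2 - s1^2) / (2 * s1 * s2 * s3)"
    and "c2 = s2 * (s1^2 + s3^2 - s2^2) / (2 * s1 * s2 * s3)"
    and "c3 = s3 * (s1^2 + s2^2 - s3^2) / (2 * s1 * s2 * s3)"
proof -
  define \<Delta> where "\<Delta> = 2*l1^2*l2^2 + 2*l2^2*l3^2 + 2*l3^2*l1^2 - l1^4 - l2^4 - l3^4"
  have d1: "1 - c1^2 = \<Delta> / (2*l2*l3)^2" using pos unfolding c1 \<Delta>_def
    by (simp add: field_simps power2_eq_square) (simp add: algebra_simps power2_eq_square power4_eq_xxxx)
  have d2: "1 - c2^2 = \<Delta> / (2*l1*l3)^2" using pos unfolding c2 \<Delta>_def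
    by (simp add: field_simps power2_eq_square) (simp add: algebra_simps power2_eq_square power4_eq_xxxx)
  have d3: "1 - c3^2 = \<Delta> / (2*l1*l2)^2" using pos unfolding c3 \<Delta>_def
    by (simp add: field_simps power2_eq_square) (simp add: algebra_simps power2_eq_square power4_eq_xxxx)
  have Dpos: "\<Delta> > 0"
  proof -
    have "\<Delta> / (2*l2*l3)^2 > 0" using lt d1 by simp
    then show ?thesis using pos by (simp add: zero_less_divide_iff)
  qed
  define \<rho> where "\<rho> = sqrt \<Delta> / (2 * l1 * l2 * l3)"
  have rpos: "\<rho> > 0" using Dpos pos by (simp add: \<rho>_def)
  have e1: "s1 = \<rho> * l1" unfolding s1 d1 \<rho>_def using pos
    by (simp add: real_sqrt_divide real_sqrt_mult field_simps)
  have e2: "s2 = \<rho> * l2" unfolding s2 d2 \<rho>_def using pos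
    by (simp add: real_sqrt_divide real_sqrt_mult field_simps)
  have e3: "s3 = \<rho> * l3" unfolding s3 d3 \<rho>_def using pos
    by (simp add: real_sqrt_divide real_sqrt_mult field_simps)
  show "\<exists>\<rho>>0. s1 = \<rho> * l1 \<and> s2 = \<rho> * l2 \<and> s3 = \<rho> * l3" using rpos e1 e2 e3 by blast
  show "s1 \<noteq> 0" "s2 \<noteq> 0" "s3 \<noteq> 0" using rpos pos e1 e2 e3 by auto
  show "c1^2 + c2^2 + c3^2 + 2 * c1 * c2 * c3 = 1" using pos unfolding c1 c2 c3
    by (simp add: field_simps power2_eq_square)
  show "c1 = s1 * (s2^2 + s3^2 - s1^2) / (2 * s1 * s2 * s3)" using pos rpos unfolding e1 e2 e3 c1
    by (simp add: field_simps power2_eq_square)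
  show "c2 = s2 * (s1^2 + s3^2 - s2^2) / (2 * s1 * s2 * s3)" using pos rpos unfolding e1 e2 e3 c2
    by (simp add: field_simps power2_eq_square)
  show "c3 = s3 * (s1^2 + s2^2 - s3^2) / (2 * s1 * s2 * s3)" using pos rpos unfolding e1 e2 e3 c3
    by (simp add: field_simps power2_eq_square)
qed



theorem proposition2p2:
  fixes P1 P2 P3 :: "real^2"
  assumes tri: "\<not> collinear {P1, P2, P3}"
  defines "l1 \<equiv> dist P2 P3" and "l2 \<equiv> dist P1 P3" and "l3 \<equiv> dist P1 P2"
      and "a1 \<equiv> vertex_angle P2 P1 P3" and "a2 \<equiv> vertex_angle P1 P2 P3"
      and "a3 \<equiv> vertex_angle P1 P3 P2"
  shows "((\<exists>k>0. alg_indep3 (k * l1) (k * l2) (k * l3)) \<longleftrightarrow>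
           (\<exists>k. alg_indep3 (k * sin a1) (k * sin a2) (k * sin a3)))
       \<and> ((\<exists>k. alg_indep3 (k * sin a1) (k * sin a2) (k * sin a3)) \<longleftrightarrow>
           (\<exists>k. alg_indep3 (k * cos a1) (k * cos a2) (k * cos a3)))
       \<and> ((\<exists>k. alg_indep3 (k * sin a1) (k * sin a2) (k * sin a3)) \<longrightarrow>
           (AE k in lborel. alg_indep3 (k * sin a1) (k * sin a2) (k * sin a3)))
       \<and> ((\<exists>k. alg_indep3 (k * cos a1) (k * cos a2) (k * cos a3)) \<longrightarrow>
           (AE k in lborel. alg_indep3 (k * cos a1) (k * cos a2) (k * cos a3)))"
proof -
  have t1: "\<not> collinear {P2, P1, P3}" using tri by (simp add: insert_commute)
  have t2: "\<not> collinear {P1, P2, P3}" using tri .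
  have t3: "\<not> collinear {P1, P3, P2}" using tri by (simp add: insert_commute)
  note V1 = vertex_facts[OF t1, folded a1_def]
  note V2 = vertex_facts[OF t2, folded a2_def]
  note V3 = vertex_facts[OF t3, folded a3_def]
  have d: "dist P2 P1 = l3" "dist P1 P3 = l2" "dist P2 P3 = l1" "dist P1 P2 = l3" "dist P3 P2 = l1"
    by (simp_all add: l1_def l2_def l3_def dist_commute)
  have pos: "l1 > 0" "l2 > 0" "l3 > 0" using V1(4,5) V2(5) by (simp_all add: d)
  have c1: "cos a1 = (l3^2 + l2^2 - l1^2) / (2 * l3 * l2)" using V1(1) by (simp add: d)
  have c2: "cos a2 = (l3^2 + l1^2 - l2^2) / (2 * l3 * l1)" using V2(1) by (simp add: d)
  have c3: "cos a3 = (l2^2 + l1^2 - l3^2) / (2 * l2 * l1)" using V3(1) by (simp add: d)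
  note TA = tri_alg[OF pos c1 c2 c3 V1(2) V2(2) V3(2) V1(3)]
  obtain \<rho> where \<rho>: "\<rho> > 0" "sin a1 = \<rho> * l1" "sin a2 = \<rho> * l2" "sin a3 = \<rho> * l3" using TA(1) by blast
  define IS where "IS = (\<exists>k. alg_indep3 (k * sin a1) (k * sin a2) (k * sin a3))"
  define IC where "IC = (\<exists>k. alg_indep3 (k * cos a1) (k * cos a2) (k * cos a3))"
  have AS: "IS \<Longrightarrow> AE k in lborel. alg_indep3 (k * sin a1) (k * sin a2) (k * sin a3)"
    unfolding IS_def using ae_indep by blast
  have AC: "IC \<Longrightarrow> AE k in lborel. alg_indep3 (k * cos a1) (k * cos a2) (k * cos a3)"
    unfolding IC_def using ae_indep by blast
  have P1: "(\<exists>k>0. alg_indep3 (k * l1) (k * l2) (k * l3)) \<longleftrightarrow> IS"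
  proof
    assume "\<exists>k>0. alg_indep3 (k * l1) (k * l2) (k * l3)"
    then obtain k where "alg_indep3 (k * l1) (k * l2) (k * l3)" by blast
    moreover have "(k / \<rho>) * sin a1 = k * l1" "(k / \<rho>) * sin a2 = k * l2" "(k / \<rho>) * sin a3 = k * l3"
      using \<rho> by simp_all
    ultimately show IS unfolding IS_def by metis
  next
    assume IS
    then obtain k where k: "k > 0" "alg_indep3 (k * sin a1) (k * sin a2) (k * sin a3)"
      using ae_exists_pos[OF AS] by blast
    have e: "(k * \<rho>) * l1 = k * sin a1" "(k * \<rho>) * l2 = k * sin a2" "(k * \<rho>) * l3 = k * sin a3"
      using \<rho> by simp_all
    have "alg_indep3 ((k * \<rho>) * l1) ((k * \<rho>) * l2) ((k * \<rho>) * l3)" unfolding e by (rule k(2))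
    moreover have "k * \<rho> > 0" using k \<rho>(1) by simp
    ultimately show "\<exists>k>0. alg_indep3 (k * l1) (k * l2) (k * l3)" by blast
  qed
  have S: "(sin a1)^2 = 1 - (cos a1)^2" "(sin a2)^2 = 1 - (cos a2)^2" "(sin a3)^2 = 1 - (cos a3)^2"
    by (simp_all add: sin_squared_eq)
  have P2: "IS \<longleftrightarrow> IC"
  proof
    assume IS
    show IC
    proof (rule ccontr)
      assume "\<not> IC"
      then have "\<forall>k. \<not> alg_indep3 (k * cos a1) (k * cos a2) (k * cos a3)" unfolding IC_def by blast
      then have "\<not> alg_indep3 (t * sin a1) (t * sin a2) (t * sin a3)" for t
        by (rule dirA[OF TA(2) S])
      then show False using \<open>IS\<close> unfolding IS_def by blast
    qed
  next
    assume IC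
    show IS
    proof (rule ccontr)
      assume "\<not> IS"
      then have "\<forall>k. \<not> alg_indep3 (k * sin a1) (k * sin a2) (k * sin a3)" unfolding IS_def by blast
      then have "\<not> alg_indep3 (t * cos a1) (t * cos a2) (t * cos a3)" for t
        by (rule dirB[OF _ TA(3-8)])
      then show False using \<open>IC\<close> unfolding IC_def by blast
    qed
  qed
  show ?thesis using P1 P2 AS AC unfolding IS_def IC_def by blast
qed

end
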